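(* Let $(\mathcal A,h,D)$ be an essentially discrete spectral triple, $P_0$ the projection onto $\ker D$, and let $a\in\mathcal A$ be such that the commutator $[|D|,a]$ is bounded. Then (i) $\|[\sqrt{I+D^2},a]\|\le\|[|D|,a]\|+2\|a\|$; (ii) $\|(I-P_0)[\sqrt{I+D^2},a](I-P_0)\|\le C_1(\lambda_1)\,\|[|D|,a]\|$, where $\lambda_1:=\lambda_1(|D|)>0$ is the smallest nonzero eigenvalue of $|D|$ and $C_1(\lambda_1)=\sqrt{1+\lambda_1^{-2}}$.
   Context: A spectral triple $(\mathcal A,h,D)$: $h$ a Hilbert space, $D$ a densely defined self-adjoint operator, $\mathcal A\subseteq B(h)$ a $*$-algebra whose elements preserve the domain of $D$ and have bounded commutators $[D,a]$. Essentially discrete: $\sigma(D)\setminus\{0\}$ is discrete, i.e. $D$ restricted to $(I-P_0)h$ has compact inverse, where $P_0$ is the projection onto $\ker D$ (possibly infinite dimensional). "$[|D|,a]$ is bounded" means $a$ preserves the domain of $|D|$ and the commutator extends to a bounded operator on $h$. *)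

theory Defs
  imports "HOL-Analysis.Analysis"
begin

text \<open>Unbounded operators on a Hilbert space 'h are modelled as a pair of a map
  T :: 'h \<Rightarrow> 'h and its domain V :: 'h set (values of T outside the domain are irrelevant).\<close>

definition densely_defined_linear :: "('h::real_inner \<Rightarrow> 'h) \<Rightarrow> 'h set \<Rightarrow> bool" where
  "densely_defined_linear T V \<longleftrightarrow>
     subspace V \<and> closure V = UNIV \<and>
     (\<forall>x\<in>V. \<forall>y\<in>V. T (x + y) = T x + T y) \<and>
     (\<forall>c. \<forall>x\<in>V. T (c *\<^sub>R x) = c *\<^sub>R T x)"

text \<open>Self-adjointness T = T*: the adjoint's domain is the set of y for which
  x \<mapsto> <T x, y> is represented by some vector z, and then T* y = z.\<close>
definition self_adjoint_op :: "('h::real_inner \<Rightarrow> 'h) \<Rightarrow> 'h set \<Rightarrow> bool" where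
  "self_adjoint_op T V \<longleftrightarrow>
     densely_defined_linear T V \<and>
     (\<forall>y. y \<in> V \<longleftrightarrow> (\<exists>z. \<forall>x\<in>V. inner (T x) y = inner x z)) \<and>
     (\<forall>x\<in>V. \<forall>y\<in>V. inner (T x) y = inner x (T y))"

definition positive_self_adjoint_op :: "('h::real_inner \<Rightarrow> 'h) \<Rightarrow> 'h set \<Rightarrow> bool" where
  "positive_self_adjoint_op T V \<longleftrightarrow>
     self_adjoint_op T V \<and> (\<forall>x\<in>V. inner (T x) x \<ge> 0)"

definition is_pos_sqrt_op ::
  "('h::real_inner \<Rightarrow> 'h) \<Rightarrow> 'h set \<Rightarrow> ('h \<Rightarrow> 'h) \<Rightarrow> 'h set \<Rightarrow> bool" where
  "is_pos_sqrt_op A domA B domB \<longleftrightarrow>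
     positive_self_adjoint_op A domA \<and>
     {x\<in>domA. A x \<in> domA} = domB \<and>
     (\<forall>x\<in>domB. A (A x) = B x)"

definition dom_sq :: "('h \<Rightarrow> 'h) \<Rightarrow> 'h set \<Rightarrow> 'h set" where
  "dom_sq D V = {x\<in>V. D x \<in> V}"

definition is_abs_op :: "('h::real_inner \<Rightarrow> 'h) \<Rightarrow> 'h set \<Rightarrow> ('h \<Rightarrow> 'h) \<Rightarrow> 'h set \<Rightarrow> bool" where
  "is_abs_op D V A domA \<longleftrightarrow> is_pos_sqrt_op A domA (\<lambda>x. D (D x)) (dom_sq D V)"

definition is_sqrt_one_plus_sq :: "('h::real_inner \<Rightarrow> 'h) \<Rightarrow> 'h set \<Rightarrow> ('h \<Rightarrow> 'h) \<Rightarrow> 'h set \<Rightarrow> bool" where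
  "is_sqrt_one_plus_sq D V S domS \<longleftrightarrow> is_pos_sqrt_op S domS (\<lambda>x. x + D (D x)) (dom_sq D V)"

definition is_orth_proj :: "('h::real_inner \<Rightarrow> 'h) \<Rightarrow> 'h set \<Rightarrow> bool" where
  "is_orth_proj P K \<longleftrightarrow> (\<forall>x. P x \<in> K \<and> (\<forall>k\<in>K. inner (x - P x) k = 0))"

definition ker_op :: "('h::real_vector \<Rightarrow> 'h) \<Rightarrow> 'h set \<Rightarrow> 'h set" where
  "ker_op D V = {x\<in>V. D x = 0}"

definition compact_op :: "('h::real_normed_vector \<Rightarrow> 'h) \<Rightarrow> bool" where
  "compact_op T \<longleftrightarrow> bounded_linear T \<and> compact (closure (T ` cball 0 1))"

text \<open>Essentially discrete: D restricted to (I - P0)h (P0 the projection onto ker D)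
  has a compact inverse; the inverse T is extended by 0 on ker D, i.e. T = T (I - P0).\<close>
definition essentially_discrete :: "('h::real_inner \<Rightarrow> 'h) \<Rightarrow> 'h set \<Rightarrow> ('h \<Rightarrow> 'h) \<Rightarrow> bool" where
  "essentially_discrete D V P0 \<longleftrightarrow>
     (\<exists>T. compact_op T \<and>
        (\<forall>x. T x \<in> V \<and> P0 (T x) = 0 \<and> D (T x) = x - P0 x \<and> T (P0 x) = 0) \<and>
        (\<forall>y\<in>V. P0 y = 0 \<longrightarrow> T (D y) = y))"

end

theory Submission
  imports Defs
begin


definition orthonorm :: "'h::real_inner set \<Rightarrow> bool" where
  "orthonorm U \<longleftrightarrow> (\<forall>u\<in>U. inner u u = 1) \<and> (\<forall>u\<in>U. \<forall>v\<in>U. u \<noteq> v \<longrightarrow> inner u v = 0)"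

lemma orth_inner_sum:
  assumes "orthonorm U" "finite F" "F \<subseteq> U" "v \<in> U"
  shows "inner (\<Sum>u\<in>F. a u *\<^sub>R u) v = (if v \<in> F then a v else 0)"
proof -
  have "inner (\<Sum>u\<in>F. a u *\<^sub>R u) v = (\<Sum>u\<in>F. a u * inner u v)"
    by (simp add: inner_sum_left)
  also have "\<dots> = (\<Sum>u\<in>F. if u = v then a v else 0)"
    using assms unfolding orthonorm_def by (intro sum.cong) auto
  also have "\<dots> = (if v \<in> F then a v else 0)"
    using assms(2) by (simp add: sum.delta)
  finally show ?thesis .
qed

lemma orth_norm_sum:
  assumes "orthonorm U" "finite F" "F \<subseteq> U"
  shows "(norm (\<Sum>u\<in>F. a u *\<^sub>R u))\<^sup>2 = (\<Sum>u\<in>F. (a u)\<^sup>2)"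
proof -
  have "(norm (\<Sum>u\<in>F. a u *\<^sub>R u))\<^sup>2 = inner (\<Sum>u\<in>F. a u *\<^sub>R u) (\<Sum>u\<in>F. a u *\<^sub>R u)"
    by (simp add: power2_norm_eq_inner)
  also have "\<dots> = (\<Sum>v\<in>F. a v * inner (\<Sum>u\<in>F. a u *\<^sub>R u) v)"
    by (simp add: inner_sum_right)
  also have "\<dots> = (\<Sum>v\<in>F. (a v)\<^sup>2)"
    using assms orth_inner_sum[OF assms] by (intro sum.cong) (auto simp: power2_eq_square)
  finally show ?thesis .
qed

lemma bessel_finite:
  assumes "orthonorm U" "finite F" "F \<subseteq> U"
  shows "(\<Sum>u\<in>F. (inner x u)\<^sup>2) \<le> (norm x)\<^sup>2"
proof -
  define p where "p = (\<Sum>u\<in>F. inner x u *\<^sub>R u)"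
  have np: "(norm p)\<^sup>2 = (\<Sum>u\<in>F. (inner x u)\<^sup>2)"
    unfolding p_def by (rule orth_norm_sum[OF assms])
  have xp: "inner x p = (\<Sum>u\<in>F. (inner x u)\<^sup>2)"
    unfolding p_def by (simp add: inner_sum_right power2_eq_square)
  have "0 \<le> (norm (x - p))\<^sup>2" by simp
  also have "\<dots> = (norm x)\<^sup>2 - 2 * inner x p + (norm p)\<^sup>2"
    by (simp add: power2_norm_eq_inner inner_diff_left inner_diff_right inner_commute)
  finally show ?thesis using np xp by simp
qed

lemma bessel:
  assumes "orthonorm U"
  shows "(\<lambda>u. (inner x u)\<^sup>2) summable_on U" "infsum (\<lambda>u. (inner x u)\<^sup>2) U \<le> (norm x)\<^sup>2"
proof -
  show s: "(\<lambda>u. (inner x u)\<^sup>2) summable_on U"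
    by (rule nonneg_bdd_above_summable_on) (use bessel_finite[OF assms] in \<open>auto intro!: bdd_aboveI\<close>)
  show "infsum (\<lambda>u. (inner x u)\<^sup>2) U \<le> (norm x)\<^sup>2"
    by (rule infsum_le_finite_sums[OF s]) (use bessel_finite[OF assms] in auto)
qed

lemma summable_sq_control:
  fixes f :: "'a \<Rightarrow> 'h::{real_normed_vector, complete_space}"
  assumes g: "g summable_on A" and g0: "\<And>x. x \<in> A \<Longrightarrow> g x \<ge> 0"
    and ctl: "\<And>F. finite F \<Longrightarrow> F \<subseteq> A \<Longrightarrow> (norm (sum f F))\<^sup>2 \<le> sum g F"
  shows "f summable_on A"
proof -
  from g obtain L where lim: "(sum g \<longlongrightarrow> L) (finite_subsets_at_top A)"
    unfolding has_sum_def summable_on_def by blast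
  have "\<exists>P. eventually P (finite_subsets_at_top A) \<and>
              (\<forall>F F'. P F \<and> P F' \<longrightarrow> dist (sum f F) (sum f F') < e)" if "e>0" for e
  proof -
    define d P where "d = e\<^sup>2/8" and "P F \<longleftrightarrow> finite F \<and> F \<subseteq> A \<and> dist (sum g F) L < d" for F
    then have "d > 0" using that by (simp add: d_def)
    have ev_P: "eventually P (finite_subsets_at_top A)"
      using lim
      by (auto simp add: P_def[abs_def] \<open>0 < d\<close> eventually_conj_iff eventually_finite_subsets_at_top_weakI tendsto_iff)
    moreover have "dist (sum f F1) (sum f F2) < e" if "P F1" and "P F2" for F1 F2
    proof -
      from ev_P
      obtain F' where "finite F'" and "F' \<subseteq> A" and P_sup_F': "finite F \<and> F \<supseteq> F' \<and> F \<subseteq> A \<Longrightarrow> P F" for F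
        by atomize_elim (simp add: eventually_finite_subsets_at_top)
      define F where "F = F' \<union> F1 \<union> F2"
      have "finite F" and "F \<subseteq> A"
        using F_def P_def[abs_def] that \<open>finite F'\<close> \<open>F' \<subseteq> A\<close> by auto
      have dist_F: "dist (sum g F) L < d"
        by (metis F_def \<open>F \<subseteq> A\<close> P_def P_sup_F' \<open>finite F\<close> le_supE order_refl)
      have dist_F_subset: "dist (sum f F) (sum f F'') < sqrt (2*d)" if F'': "F'' \<subseteq> F" "P F''" for F''
      proof -
        have fin: "finite (F - F'')" "F - F'' \<subseteq> A" using \<open>finite F\<close> \<open>F \<subseteq> A\<close> by auto
        have "dist (sum f F) (sum f F'') = norm (sum f (F-F''))"
          unfolding dist_norm using \<open>finite F\<close> F'' by (subst sum_diff) auto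
        also have "\<dots> \<le> sqrt (sum g (F - F''))"
          using ctl[OF fin] real_le_rsqrt by blast
        also have "sum g (F - F'') = sum g F - sum g F''"
          using \<open>finite F\<close> F'' by (subst sum_diff) auto
        also have "sqrt (sum g F - sum g F'') < sqrt (2*d)"
          using dist_F F'' unfolding P_def dist_real_def by (intro real_sqrt_less_mono) linarith
        finally show ?thesis .
      qed
      have "dist (sum f F1) (sum f F2) \<le> dist (sum f F) (sum f F1) + dist (sum f F) (sum f F2)"
        by (rule dist_triangle3)
      also have "\<dots> < sqrt (2*d) + sqrt (2*d)"
        by (intro add_strict_mono dist_F_subset that) (auto simp: F_def)
      also have "sqrt (2*d) = e/2"
        using \<open>e > 0\<close> unfolding d_def by (simp add: real_sqrt_divide power2_eq_square real_sqrt_mult)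
      finally show ?thesis by simp
    qed
    ultimately show ?thesis by blast
  qed
  then have "cauchy_filter (filtermap (sum f) (finite_subsets_at_top A))"
    by (simp add: cauchy_filter_metric_filtermap)
  moreover have "complete (UNIV::'h set)"
    by (meson Cauchy_convergent UNIV_I complete_def convergent_def)
  ultimately obtain L' where "(sum f \<longlongrightarrow> L') (finite_subsets_at_top A)"
    using complete_uniform[where S=UNIV] by (force simp add: filterlim_def)
  then show ?thesis
    using summable_on_def has_sum_def by blast
qed

lemma rf_summable:
  fixes U :: "'h::{real_inner, complete_space} set"
  assumes "orthonorm U" "(\<lambda>u. (a u)\<^sup>2) summable_on U"
  shows "(\<lambda>u. a u *\<^sub>R u) summable_on U"
  by (rule summable_sq_control[OF assms(2)]) (use orth_norm_sum[OF assms(1)] in auto)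

lemma rf_inner:
  fixes U :: "'h::{real_inner, complete_space} set"
  assumes "orthonorm U" "(\<lambda>u. (a u)\<^sup>2) summable_on U" "v \<in> U"
  shows "inner (infsum (\<lambda>u. a u *\<^sub>R u) U) v = a v"
proof -
  have "((\<lambda>u. inner (a u *\<^sub>R u) v) has_sum inner (infsum (\<lambda>u. a u *\<^sub>R u) U) v) U"
    using has_sum_bounded_linear[OF bounded_linear_inner_left rf_summable[OF assms(1,2), unfolded summable_iff_has_sum_infsum]] .
  moreover have "((\<lambda>u. inner (a u *\<^sub>R u) v) has_sum a v) U"
  proof -
    have "((\<lambda>u. inner (a u *\<^sub>R u) v) has_sum (\<Sum>u\<in>{v}. inner (a u *\<^sub>R u) v)) {v}"
      by (rule has_sum_finite) simp
    then have "((\<lambda>u. inner (a u *\<^sub>R u) v) has_sum a v) {v}"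
      using assms(1,3) by (simp add: orthonorm_def)
    then show ?thesis
      by (rule has_sum_cong_neutral[THEN iffD1, rotated -1]) (use assms(1,3) in \<open>auto simp: orthonorm_def\<close>)
  qed
  ultimately show ?thesis using has_sum_unique by blast
qed

lemma rf_perp:
  fixes U :: "'h::{real_inner, complete_space} set"
  assumes "orthonorm U" "(\<lambda>u. (a u)\<^sup>2) summable_on U" "\<forall>u\<in>U. inner u w = 0"
  shows "inner (infsum (\<lambda>u. a u *\<^sub>R u) U) w = 0"
proof -
  have "((\<lambda>u. inner (a u *\<^sub>R u) w) has_sum inner (infsum (\<lambda>u. a u *\<^sub>R u) U) w) U"
    using has_sum_bounded_linear[OF bounded_linear_inner_left rf_summable[OF assms(1,2), unfolded summable_iff_has_sum_infsum]] .
  moreover have "((\<lambda>u. inner (a u *\<^sub>R u) w) has_sum 0) U"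
    using assms(3) by (intro has_sum_0) simp
  ultimately show ?thesis using has_sum_unique by blast
qed



lemma norm_diff_scale_sq:
  fixes a b :: "'h::real_inner"
  shows "(norm (a - c *\<^sub>R b))\<^sup>2 = (norm a)\<^sup>2 - 2 * c * inner a b + c\<^sup>2 * (norm b)\<^sup>2"
  unfolding power2_norm_eq_inner
  by (simp add: inner_diff_left inner_diff_right inner_commute algebra_simps power2_eq_square)

lemma compact_sym_eigen:
  fixes T :: "'h::{real_inner,complete_space} \<Rightarrow> 'h"
  assumes bl: "bounded_linear T" and cpt: "compact (closure (T ` cball 0 1))"
    and sym: "\<And>x y. inner (T x) y = inner x (T y)"
    and Wc: "closed W" and Ws: "subspace W" and WT: "\<And>x. x \<in> W \<Longrightarrow> T x \<in> W"
    and w0: "w0 \<in> W" "T w0 \<noteq> 0"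
  shows "\<exists>v\<in>W. v \<noteq> 0 \<and> (\<exists>t. t \<noteq> 0 \<and> T v = t *\<^sub>R v)"
proof -
  interpret T: bounded_linear T by fact
  define SS where "SS = {(norm (T x))\<^sup>2 | x. x \<in> W \<and> norm x \<le> 1}"
  define M where "M = Sup SS"
  have bdd: "bdd_above SS"
  proof (rule bdd_aboveI)
    fix s assume "s \<in> SS"
    then obtain x where x: "s = (norm (T x))\<^sup>2" "norm x \<le> 1" unfolding SS_def by blast
    have "norm (T x) \<le> onorm T * norm x" by (rule onorm[OF bl])
    also have "\<dots> \<le> onorm T" using x onorm_pos_le[OF bl] by (simp add: mult_left_le)
    finally show "s \<le> (onorm T)\<^sup>2" using x by (simp add: power_mono)
  qed
  have ne: "SS \<noteq> {}" unfolding SS_def using subspace_0[OF Ws] by force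
  have upper: "(norm (T x))\<^sup>2 \<le> M" if "x \<in> W" "norm x \<le> 1" for x
    unfolding M_def by (rule cSup_upper[OF _ bdd]) (use that in \<open>auto simp: SS_def\<close>)
  have scaled: "(norm (T y))\<^sup>2 \<le> M * (norm y)\<^sup>2" if "y \<in> W" for y
  proof (cases "y = 0")
    case True then show ?thesis using upper[of 0] subspace_0[OF Ws] by simp
  next
    case False
    define x where "x = (1 / norm y) *\<^sub>R y"
    have "x \<in> W" unfolding x_def using Ws that by (simp add: subspace_scale)
    moreover have "norm x = 1" unfolding x_def using False by simp
    ultimately have "(norm (T x))\<^sup>2 \<le> M" using upper by simp
    moreover have "T x = (1 / norm y) *\<^sub>R T y" unfolding x_def by (simp add: T.scaleR)
    ultimately have "(norm (T y))\<^sup>2 / (norm y)\<^sup>2 \<le> M"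
      by (simp add: power_divide)
    then show ?thesis using False by (simp add: field_simps)
  qed
  have Mpos: "M > 0"
  proof -
    have "0 < (norm (T w0))\<^sup>2" using w0 by simp
    also have "\<dots> \<le> M * (norm w0)\<^sup>2" using scaled w0 by blast
    finally show ?thesis using zero_le_power2[of "norm w0"] by (auto simp: zero_less_mult_iff)
  qed
  have "\<exists>x. x \<in> W \<and> norm x \<le> 1 \<and> M - 1 / (real n + 1) < (norm (T x))\<^sup>2" for n
  proof -
    have "M - 1 / (real n + 1) < M" by simp
    then obtain s where "s \<in> SS" "M - 1 / (real n + 1) < s"
      unfolding M_def using less_cSup_iff[OF ne bdd] by blast
    then show ?thesis unfolding SS_def by blast
  qed
  then obtain x where x: "\<And>n. x n \<in> W" "\<And>n. norm (x n) \<le> 1"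
    "\<And>n. M - 1 / (real n + 1) < (norm (T (x n)))\<^sup>2" by metis
  have "\<forall>n. T (x n) \<in> closure (T ` cball 0 1)"
    using x(2) closure_subset by (force simp: dist_norm)
  then obtain l r where r: "strict_mono r" and lim: "((\<lambda>n. T (x n)) \<circ> r) \<longlonglongrightarrow> l"
    using cpt unfolding compact_def by metis
  define y where "y n = x (r n)" for n
  have limTy: "(\<lambda>n. T (y n)) \<longlonglongrightarrow> l" using lim unfolding y_def comp_def .
  have yW: "y n \<in> W" for n unfolding y_def using x by simp
  have yn: "norm (y n) \<le> 1" for n unfolding y_def using x by simp
  have ylow: "M - 1 / (real n + 1) \<le> (norm (T (y n)))\<^sup>2" for n
  proof -
    have "n \<le> r n" using seq_suble[OF r] by simp
    then have "1 / (real (r n) + 1) \<le> 1 / (real n + 1)" by (simp add: frac_le)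
    then show ?thesis using x(3)[of "r n"] unfolding y_def by linarith
  qed
  define e where "e n = T (T (y n)) - M *\<^sub>R y n" for n
  have ebound: "(norm (e n))\<^sup>2 \<le> M * (1 / (real n + 1))" for n
  proof -
    have i1: "inner (T (T (y n))) (y n) = (norm (T (y n)))\<^sup>2"
      by (simp add: sym power2_norm_eq_inner)
    have i2: "(norm (T (T (y n))))\<^sup>2 \<le> M * (norm (T (y n)))\<^sup>2"
      using scaled WT yW by blast
    have i3: "(norm (y n))\<^sup>2 \<le> 1" using yn by (simp add: power_le_one)
    have "(norm (e n))\<^sup>2 = (norm (T (T (y n))))\<^sup>2 - 2 * M * inner (T (T (y n))) (y n) + M\<^sup>2 * (norm (y n))\<^sup>2"
      unfolding e_def by (rule norm_diff_scale_sq)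
    also have "\<dots> \<le> M * (norm (T (y n)))\<^sup>2 - 2 * M * (norm (T (y n)))\<^sup>2 + M\<^sup>2"
    proof -
      have "M\<^sup>2 * (norm (y n))\<^sup>2 \<le> M\<^sup>2" by (rule mult_left_le[OF i3]) simp
      then show ?thesis unfolding i1 using i2 by linarith
    qed
    also have "\<dots> = M * (M - (norm (T (y n)))\<^sup>2)" by (simp add: power2_eq_square algebra_simps)
    also have "\<dots> \<le> M * (1 / (real n + 1))"
      using ylow[of n] Mpos by (intro mult_left_mono) auto
    finally show ?thesis .
  qed
  have inv0: "(\<lambda>n. 1 / (real n + 1)) \<longlonglongrightarrow> 0"
    using LIMSEQ_inverse_real_of_nat by (simp add: divide_inverse add.commute)
  have e0: "e \<longlonglongrightarrow> 0"
  proof -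
    have a: "(\<lambda>n. M * (1 / (real n + 1))) \<longlonglongrightarrow> 0"
      using tendsto_mult_right_zero[OF inv0] .
    have b: "(\<lambda>n. sqrt (M * (1 / (real n + 1)))) \<longlonglongrightarrow> 0"
      using tendsto_real_sqrt[OF a] by simp
    have c: "norm (e n) \<le> sqrt (M * (1 / (real n + 1)))" for n
      using ebound real_le_rsqrt by blast
    have "(\<lambda>n. norm (e n)) \<longlonglongrightarrow> 0"
      by (rule tendsto_sandwich[OF _ _ tendsto_const b]) (use c in \<open>auto intro!: always_eventually\<close>)
    then show ?thesis by (rule tendsto_norm_zero_cancel)
  qed
  have "(\<lambda>n. T (T (y n)) - e n) \<longlonglongrightarrow> T l - 0"
    by (intro tendsto_diff T.tendsto limTy e0)
  then have "(\<lambda>n. M *\<^sub>R y n) \<longlonglongrightarrow> T l" by (simp add: e_def)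
  then have "(\<lambda>n. (1/M) *\<^sub>R (M *\<^sub>R y n)) \<longlonglongrightarrow> (1/M) *\<^sub>R T l"
    by (intro tendsto_scaleR tendsto_const)
  then have ylim: "y \<longlonglongrightarrow> (1/M) *\<^sub>R T l" using Mpos by simp
  define v where "v = (1/M) *\<^sub>R T l"
  have vW: "v \<in> W" unfolding v_def using closed_sequentially[OF Wc _ ylim] yW by blast
  have "(\<lambda>n. T (y n)) \<longlonglongrightarrow> T v" using ylim unfolding v_def by (intro T.tendsto)
  then have Tv: "T v = l" using limTy LIMSEQ_unique by blast
  have TTv: "T (T v) = M *\<^sub>R v"
  proof -
    have "T (T v) = T l" using Tv by simp
    also have "T l = M *\<^sub>R v" using Mpos by (simp add: v_def)
    finally show ?thesis .
  qed
  have lim1: "(\<lambda>n. M - 1 / (real n + 1)) \<longlonglongrightarrow> M"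
    using tendsto_diff[OF tendsto_const inv0, of M] by simp
  have lim2: "(\<lambda>n. (norm (T (y n)))\<^sup>2) \<longlonglongrightarrow> (norm l)\<^sup>2"
    by (intro tendsto_power tendsto_norm limTy)
  have "M \<le> (norm l)\<^sup>2"
    by (rule LIMSEQ_le[OF lim1 lim2]) (use ylow in blast)
  then have "l \<noteq> 0" using Mpos by auto
  then have v0: "v \<noteq> 0" using Tv T.zero by auto
  define s where "s = sqrt M"
  have s: "s > 0" "s * s = M" using Mpos unfolding s_def by (auto simp: real_sqrt_mult_self)
  define w where "w = T v + s *\<^sub>R v"
  show ?thesis
  proof (cases "w = 0")
    case True
    then have "T v = (- s) *\<^sub>R v" unfolding w_def by (simp add: eq_neg_iff_add_eq_0)
    moreover have "(- s) \<noteq> 0" using s by simp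
    ultimately show ?thesis using vW v0 by blast
  next
    case False
    have "T w = s *\<^sub>R w"
      unfolding w_def using TTv s by (simp add: T.add T.scaleR scaleR_add_right)
    moreover have "w \<in> W" unfolding w_def using Ws WT vW by (simp add: subspace_add subspace_scale)
    moreover have "s \<noteq> 0" using s by simp
    ultimately show ?thesis using False by blast
  qed
qed



section \<open>Generic facts on self-adjoint operators\<close>

lemma sa_sub: "self_adjoint_op L V \<Longrightarrow> subspace V"
  unfolding self_adjoint_op_def densely_defined_linear_def by blast

lemma sa_add: "self_adjoint_op L V \<Longrightarrow> x \<in> V \<Longrightarrow> y \<in> V \<Longrightarrow> L (x + y) = L x + L y"
  unfolding self_adjoint_op_def densely_defined_linear_def by blast

lemma sa_scale: "self_adjoint_op L V \<Longrightarrow> x \<in> V \<Longrightarrow> L (c *\<^sub>R x) = c *\<^sub>R L x"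
  unfolding self_adjoint_op_def densely_defined_linear_def by blast

lemma sa_zero: "self_adjoint_op L V \<Longrightarrow> L 0 = 0"
  using sa_scale[of L V 0 0] subspace_0[OF sa_sub] by fastforce

lemma sa_diff: "self_adjoint_op L V \<Longrightarrow> x \<in> V \<Longrightarrow> y \<in> V \<Longrightarrow> L (x - y) = L x - L y"
proof -
  assume a: "self_adjoint_op L V" "x \<in> V" "y \<in> V"
  have "(-1) *\<^sub>R y \<in> V" using a sa_sub subspace_scale by blast
  then have "L (x + (-1) *\<^sub>R y) = L x + L ((-1) *\<^sub>R y)"
    using sa_add[OF a(1,2)] by blast
  also have "L ((-1) *\<^sub>R y) = (-1) *\<^sub>R L y" using sa_scale[OF a(1,3)] by blast
  finally show ?thesis by simp
qed

lemma sa_sym: "self_adjoint_op L V \<Longrightarrow> x \<in> V \<Longrightarrow> y \<in> V \<Longrightarrow> inner (L x) y = inner x (L y)"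
  unfolding self_adjoint_op_def by blast

lemma sa_adj: "self_adjoint_op L V \<Longrightarrow> (\<And>x. x \<in> V \<Longrightarrow> inner (L x) y = inner x z) \<Longrightarrow> y \<in> V"
  unfolding self_adjoint_op_def by blast

lemma psa_sa: "positive_self_adjoint_op L V \<Longrightarrow> self_adjoint_op L V"
  unfolding positive_self_adjoint_op_def by blast

lemma psa_pos: "positive_self_adjoint_op L V \<Longrightarrow> x \<in> V \<Longrightarrow> inner (L x) x \<ge> 0"
  unfolding positive_self_adjoint_op_def by blast

lemma sqrt_eig:
  assumes L: "positive_self_adjoint_op L V" and x: "x \<in> V" "L x \<in> V"
    and LL: "L (L x) = m\<^sup>2 *\<^sub>R x" and m: "m \<ge> 0"
  shows "L x = m *\<^sub>R x"
proof (cases "m = 0")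
  case True
  have "inner (L x) (L x) = inner (L (L x)) x" using sa_sym[OF psa_sa[OF L] x(2) x(1)] by simp
  also have "\<dots> = 0" using LL True by simp
  finally show ?thesis using True by simp
next
  case False
  have sa: "self_adjoint_op L V" using psa_sa[OF L] .
  define p where "p = L x - m *\<^sub>R x"
  have mx: "m *\<^sub>R x \<in> V" using x sa_sub[OF sa] subspace_scale by blast
  have pV: "p \<in> V" unfolding p_def using x mx sa_sub[OF sa] subspace_diff by blast
  have "L p = L (L x) - m *\<^sub>R L x" unfolding p_def using sa_diff[OF sa x(2) mx] sa_scale[OF sa x(1)] by simp
  also have "\<dots> = (- m) *\<^sub>R p" unfolding p_def LL by (simp add: power2_eq_square algebra_simps)
  finally have Lp: "L p = (- m) *\<^sub>R p" .
  have "0 \<le> inner (L p) p" using psa_pos[OF L pV] .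
  also have "\<dots> = - m * inner p p" using Lp by simp
  finally have "inner p p \<le> 0" using False m by (simp add: mult_le_0_iff)
  then have "p = 0" by (metis inner_eq_zero_iff inner_ge_zero order_antisym)
  then show ?thesis unfolding p_def by simp
qed



locale spec1 =
  fixes D :: "'h::{real_inner, complete_space} \<Rightarrow> 'h" and domD :: "'h set"
    and P0 :: "'h \<Rightarrow> 'h" and T :: "'h \<Rightarrow> 'h"
  assumes sa: "self_adjoint_op D domD"
    and P0: "is_orth_proj P0 (ker_op D domD)"
    and Tc: "compact_op T"
    and Tp: "\<And>x. T x \<in> domD \<and> P0 (T x) = 0 \<and> D (T x) = x - P0 x \<and> T (P0 x) = 0"
    and TD: "\<And>y. y \<in> domD \<Longrightarrow> P0 y = 0 \<Longrightarrow> T (D y) = y"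
begin

abbreviation "K \<equiv> ker_op D domD"

lemma K_dom: "k \<in> K \<Longrightarrow> k \<in> domD" and K_D: "k \<in> K \<Longrightarrow> D k = 0"
  unfolding ker_op_def by auto

lemma P0K: "P0 x \<in> K" using P0 unfolding is_orth_proj_def by blast

lemma P0perp: "k \<in> K \<Longrightarrow> inner (x - P0 x) k = 0" using P0 unfolding is_orth_proj_def by blast

lemma P0perp': "k \<in> K \<Longrightarrow> inner x k = inner (P0 x) k"
  using P0perp[of k x] by (simp add: inner_diff_left)

lemma P0_inner: "k \<in> K \<Longrightarrow> inner (P0 x) k = inner x k"
  using P0perp'[of k x] by simp

lemma K_subspace: "subspace K"
proof -
  have s: "subspace domD" using sa_sub[OF sa] .
  show ?thesis unfolding subspace_def ker_op_def
    using s sa_zero[OF sa] sa_add[OF sa] sa_scale[OF sa]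
    by (simp add: subspace_0 subspace_add subspace_scale)
qed

lemma K_self0: "k \<in> K \<Longrightarrow> (\<And>k'. k' \<in> K \<Longrightarrow> inner k k' = 0) \<Longrightarrow> k = 0"
  by (metis inner_eq_zero_iff)

lemma P0_on_K: "k \<in> K \<Longrightarrow> P0 k = k"
proof -
  assume k: "k \<in> K"
  have "k - P0 k \<in> K" using k P0K K_subspace subspace_diff by blast
  moreover have "inner (k - P0 k) k' = 0" if "k' \<in> K" for k' using P0perp that by blast
  ultimately show ?thesis using K_self0 by fastforce
qed

lemma P0_perp0: "(\<And>k. k \<in> K \<Longrightarrow> inner z k = 0) \<Longrightarrow> P0 z = 0"
proof -
  assume z: "\<And>k. k \<in> K \<Longrightarrow> inner z k = 0"
  have "inner (P0 z) k = 0" if "k \<in> K" for k using z[OF that] P0perp'[OF that, of z] by simp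
  then show ?thesis using K_self0 P0K by blast
qed

lemma P0_eq: "(\<And>k. k \<in> K \<Longrightarrow> inner a k = inner b k) \<Longrightarrow> P0 a = P0 b"
proof -
  assume h: "\<And>k. k \<in> K \<Longrightarrow> inner a k = inner b k"
  have "P0 a - P0 b \<in> K" using P0K K_subspace subspace_diff by blast
  moreover have "inner (P0 a - P0 b) k = 0" if "k \<in> K" for k
    using h[OF that] P0perp'[OF that, of a] P0perp'[OF that, of b] by (simp add: inner_diff_left)
  ultimately show ?thesis using K_self0 by fastforce
qed

lemma P0_add: "P0 (x + y) = P0 x + P0 y"
proof -
  have "P0 (x + y) = P0 (P0 x + P0 y)"
    by (rule P0_eq) (simp add: P0_inner inner_add_left)
  also have "\<dots> = P0 x + P0 y" by (rule P0_on_K) (rule subspace_add[OF K_subspace P0K P0K])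
  finally show ?thesis .
qed

lemma P0_scale: "P0 (c *\<^sub>R x) = c *\<^sub>R P0 x"
proof -
  have "P0 (c *\<^sub>R x) = P0 (c *\<^sub>R P0 x)"
    by (rule P0_eq) (simp add: P0_inner)
  also have "\<dots> = c *\<^sub>R P0 x" by (rule P0_on_K) (rule subspace_scale[OF K_subspace P0K])
  finally show ?thesis .
qed

lemma inner_P0_left: "inner (P0 x) y = inner (P0 x) (P0 y)"
  using P0perp'[OF P0K, of y x] by (simp add: inner_commute)

lemma inner_P0_right: "inner x (P0 y) = inner (P0 x) (P0 y)"
  using P0perp'[OF P0K, of x y] by simp

lemma P0_norm_sq: "(norm x)\<^sup>2 = (norm (P0 x))\<^sup>2 + (norm (x - P0 x))\<^sup>2"
proof -
  have "inner (x - P0 x) (P0 x) = 0" using P0perp P0K by blast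
  then show ?thesis unfolding power2_norm_eq_inner
    by (simp add: inner_diff_left inner_diff_right inner_commute)
qed

lemma P0_norm: "norm (P0 x) \<le> norm x"
proof -
  have "(norm (P0 x))\<^sup>2 \<le> (norm x)\<^sup>2" using P0_norm_sq[of x] by simp
  then show ?thesis by (rule power2_le_imp_le) simp
qed

lemma Q_norm: "norm (x - P0 x) \<le> norm x"
proof -
  have "(norm (x - P0 x))\<^sup>2 \<le> (norm x)\<^sup>2" using P0_norm_sq[of x] by simp
  then show ?thesis by (rule power2_le_imp_le) simp
qed

lemma P0_bl: "bounded_linear P0"
  by (rule bounded_linear_intro[where K=1]) (simp_all add: P0_add P0_scale P0_norm)

lemma P0_idem: "P0 (P0 x) = P0 x" using P0_on_K P0K by blast

lemma P0_Q: "P0 (x - P0 x) = 0"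
  using P0_add[of "x - P0 x" "P0 x"] P0_idem by simp

lemma T_bl: "bounded_linear T" using Tc unfolding compact_op_def by blast

lemma T_cpt: "compact (closure (T ` cball 0 1))" using Tc unfolding compact_op_def by blast

lemma T_perp: "k \<in> K \<Longrightarrow> inner (T x) k = 0"
  using P0perp[of k "T x"] Tp[of x] by simp

lemma T_sym: "inner (T x) y = inner x (T y)"
proof -
  have "inner (T x) y = inner (T x) (y - P0 y)"
    using T_perp[OF P0K, of x y] by (simp add: inner_diff_right)
  also have "\<dots> = inner (T x) (D (T y))" using Tp[of y] by simp
  also have "\<dots> = inner (D (T x)) (T y)" using sa_sym[OF sa, of "T x" "T y"] Tp by simp
  also have "\<dots> = inner (x - P0 x) (T y)" using Tp[of x] by simp
  also have "\<dots> = inner x (T y)"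
  proof -
    have "inner (P0 x) (T y) = 0" using T_perp[OF P0K, of y x] by (simp add: inner_commute)
    then show ?thesis by (simp add: inner_diff_left)
  qed
  finally show ?thesis .
qed

lemma T_inj: "(\<And>k. k \<in> K \<Longrightarrow> inner z k = 0) \<Longrightarrow> T z = 0 \<Longrightarrow> z = 0"
proof -
  assume z: "\<And>k. k \<in> K \<Longrightarrow> inner z k = 0" "T z = 0"
  have "D (T z) = z - P0 z" using Tp by blast
  then show ?thesis using z P0_perp0[OF z(1)] sa_zero[OF sa] by simp
qed

definition "Eset = {v. v \<in> domD \<and> P0 v = 0 \<and> (\<exists>\<mu>. \<mu> \<noteq> 0 \<and> D v = \<mu> *\<^sub>R v)}"

lemma exists_maximal:
  "\<exists>U. orthonorm U \<and> U \<subseteq> Eset \<and> (\<forall>U'. orthonorm U' \<and> U' \<subseteq> Eset \<and> U \<subseteq> U' \<longrightarrow> U' = U)"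
proof -
  define A where "A = {U. orthonorm U \<and> U \<subseteq> Eset}"
  have "\<forall>C\<in>chains A. \<Union>C \<in> A"
  proof
    fix C assume C: "C \<in> chains A"
    then have CA: "C \<subseteq> A" and ch: "\<And>X Y. X \<in> C \<Longrightarrow> Y \<in> C \<Longrightarrow> X \<subseteq> Y \<or> Y \<subseteq> X"
      unfolding chains_def chain_subset_def by auto
    have "orthonorm (\<Union>C)"
      unfolding orthonorm_def
    proof (intro conjI ballI impI)
      fix u assume "u \<in> \<Union>C"
      then obtain X where "X \<in> C" "u \<in> X" by blast
      then show "inner u u = 1" using CA unfolding A_def orthonorm_def by blast
    next
      fix u v assume uv: "u \<in> \<Union>C" "v \<in> \<Union>C" "u \<noteq> v"
      then obtain X Y where XY: "X \<in> C" "u \<in> X" "Y \<in> C" "v \<in> Y" by blast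
      then have "u \<in> X \<union> Y" "v \<in> X \<union> Y" "X \<union> Y \<in> C"
        using ch[OF XY(1) XY(3)] by (auto simp: sup_absorb1 sup_absorb2)
      then show "inner u v = 0" using CA uv(3) unfolding A_def orthonorm_def by blast
    qed
    moreover have "\<Union>C \<subseteq> Eset" using CA unfolding A_def by blast
    ultimately show "\<Union>C \<in> A" unfolding A_def by blast
  qed
  then obtain M where "M \<in> A" "\<forall>X\<in>A. M \<subseteq> X \<longrightarrow> X = M" using Zorn_Lemma by blast
  then show ?thesis unfolding A_def by blast
qed

end



locale spec2 = spec1 +
  fixes U
  assumes U_on: "orthonorm U" and U_E: "U \<subseteq> Eset"
    and U_max: "\<And>U'. orthonorm U' \<Longrightarrow> U' \<subseteq> Eset \<Longrightarrow> U \<subseteq> U' \<Longrightarrow> U' = U"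
begin

lemma U_props: "u \<in> U \<Longrightarrow> u \<in> domD \<and> P0 u = 0 \<and> (\<exists>\<mu>. \<mu> \<noteq> 0 \<and> D u = \<mu> *\<^sub>R u)"
  using U_E unfolding Eset_def by blast

lemma U_perpK: "u \<in> U \<Longrightarrow> k \<in> K \<Longrightarrow> inner u k = 0"
  using P0perp[of k u] U_props by simp

lemma U_norm: "u \<in> U \<Longrightarrow> inner u u = 1" using U_on unfolding orthonorm_def by blast

lemma T_on_U: "u \<in> U \<Longrightarrow> \<exists>\<mu>. \<mu> \<noteq> 0 \<and> T u = (1/\<mu>) *\<^sub>R u"
proof -
  assume u: "u \<in> U"
  then obtain \<mu> where m: "\<mu> \<noteq> 0" "D u = \<mu> *\<^sub>R u" "u \<in> domD" "P0 u = 0" using U_props by blast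
  have "T (D u) = u" using TD m by blast
  then have "\<mu> *\<^sub>R T u = u" using m linear_simps(5)[OF T_bl] by metis
  then have "T u = (1/\<mu>) *\<^sub>R u" using m(1) by (metis scaleR_scaleR field_class.field_inverse scaleR_one divide_inverse_commute mult.commute divide_self_if inverse_eq_divide mult_1)
  then show ?thesis using m(1) by blast
qed

definition "Wset = {x. (\<forall>k\<in>K. inner x k = 0) \<and> (\<forall>u\<in>U. inner x u = 0)}"

lemma Wset_closed: "closed Wset"
proof -
  have "Wset = (\<Inter>k\<in>K. {x. inner x k = 0}) \<inter> (\<Inter>u\<in>U. {x. inner x u = 0})"
    unfolding Wset_def by auto
  moreover have "closed (\<Inter>k\<in>K. {x. inner x k = 0})"
    by (intro closed_INT ballI closed_Collect_eq continuous_intros)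
  moreover have "closed (\<Inter>u\<in>U. {x. inner x u = 0})"
    by (intro closed_INT ballI closed_Collect_eq continuous_intros)
  ultimately show ?thesis by auto
qed

lemma Wset_subspace: "subspace Wset"
  unfolding subspace_def Wset_def by (simp add: inner_add_left)

lemma W0:
  assumes zK: "\<And>k. k \<in> K \<Longrightarrow> inner z k = 0" and zU: "\<And>u. u \<in> U \<Longrightarrow> inner z u = 0"
  shows "z = 0"
proof (rule ccontr)
  assume z0: "z \<noteq> 0"
  have zW: "z \<in> Wset" unfolding Wset_def using zK zU by blast
  have Tz: "T z \<noteq> 0" using T_inj zK z0 by blast
  have WT: "T x \<in> Wset" if "x \<in> Wset" for x
  proof -
    have "inner (T x) u = 0" if u: "u \<in> U" for u
    proof -
      obtain \<mu> where "T u = (1/\<mu>) *\<^sub>R u" using T_on_U[OF u] by blast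
      then show ?thesis using \<open>x \<in> Wset\<close> u unfolding Wset_def by (simp add: T_sym)
    qed
    then show ?thesis unfolding Wset_def using T_perp by blast
  qed
  obtain v t where v: "v \<in> Wset" "v \<noteq> 0" "t \<noteq> 0" "T v = t *\<^sub>R v"
    using compact_sym_eigen[OF T_bl T_cpt T_sym Wset_closed Wset_subspace WT zW Tz] by blast
  define v' where "v' = (1 / norm v) *\<^sub>R v"
  have v'W: "v' \<in> Wset" unfolding v'_def using v(1) Wset_subspace subspace_scale by blast
  have v'n: "inner v' v' = 1" unfolding v'_def using v(2)
    by (simp add: power2_norm_eq_inner[symmetric] power2_eq_square)
  have Tv': "T v' = t *\<^sub>R v'" unfolding v'_def using v(4) linear_simps(5)[OF T_bl] by simp
  define y where "y = (1/t) *\<^sub>R v'"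
  have yW: "y \<in> Wset" unfolding y_def using v'W Wset_subspace subspace_scale by blast
  have Ty: "T y = v'" unfolding y_def using Tv' v(3) linear_simps(5)[OF T_bl] by simp
  have P0v': "P0 v' = 0" using v'W unfolding Wset_def by (intro P0_perp0) blast
  have P0y: "P0 y = 0" using yW unfolding Wset_def by (intro P0_perp0) blast
  have v'D: "v' \<in> domD" using Tp[of y] Ty by simp
  have Dv': "D v' = (1/t) *\<^sub>R v'" using Tp[of y] Ty P0y unfolding y_def by simp
  have "1/t \<noteq> 0" using v(3) by simp
  then have v'E: "v' \<in> Eset" unfolding Eset_def using v'D P0v' Dv' by blast
  have v'U: "v' \<notin> U" using v'W v'n unfolding Wset_def by auto
  have "orthonorm (insert v' U)"
    using U_on v'n v'W unfolding orthonorm_def Wset_def by (auto simp: inner_commute)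
  moreover have "insert v' U \<subseteq> Eset" using U_E v'E by blast
  ultimately have "insert v' U = U" using U_max by blast
  then show False using v'U by blast
qed

lemma ext_eq:
  assumes "\<And>k. k \<in> K \<Longrightarrow> inner x k = inner y k" "\<And>u. u \<in> U \<Longrightarrow> inner x u = inner y u"
  shows "x = y"
  using W0[of "x - y"] assms by (simp add: inner_diff_left)

end



context spec2 begin

definition "mu u = inner (D u) u"

lemma mu: "u \<in> U \<Longrightarrow> D u = mu u *\<^sub>R u \<and> mu u \<noteq> 0 \<and> u \<in> domD"
proof -
  assume u: "u \<in> U"
  then obtain \<mu> where m: "\<mu> \<noteq> 0" "D u = \<mu> *\<^sub>R u" "u \<in> domD" using U_props by blast
  have "mu u = \<mu>" unfolding mu_def using m U_norm[OF u] by simp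
  then show ?thesis using m by simp
qed

definition "cvec g = infsum (\<lambda>u. g u *\<^sub>R u) U"

lemma cvec_inner: "(\<lambda>u. (g u)\<^sup>2) summable_on U \<Longrightarrow> u \<in> U \<Longrightarrow> inner (cvec g) u = g u"
  unfolding cvec_def by (rule rf_inner[OF U_on])

lemma cvec_K: "(\<lambda>u. (g u)\<^sup>2) summable_on U \<Longrightarrow> k \<in> K \<Longrightarrow> inner (cvec g) k = 0"
  unfolding cvec_def by (rule rf_perp[OF U_on]) (use U_perpK in auto)

lemma bessel_U: "(\<lambda>u. (inner x u)\<^sup>2) summable_on U" "infsum (\<lambda>u. (inner x u)\<^sup>2) U \<le> (norm x)\<^sup>2"
  using bessel[OF U_on] by auto

lemma P0_inner_U: "u \<in> U \<Longrightarrow> inner (P0 x) u = 0"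
  using U_perpK[OF _ P0K] by (simp add: inner_commute)

lemma expansion: "x - P0 x = cvec (\<lambda>u. inner x u)"
proof (rule ext_eq)
  fix k assume k: "k \<in> K"
  show "inner (x - P0 x) k = inner (cvec (\<lambda>u. inner x u)) k"
    using P0perp[OF k] cvec_K[OF bessel_U(1) k] by simp
next
  fix u assume u: "u \<in> U"
  show "inner (x - P0 x) u = inner (cvec (\<lambda>u. inner x u)) u"
    using cvec_inner[OF bessel_U(1) u] P0_inner_U[OF u] by (simp add: inner_diff_left)
qed

lemma parseval: "inner p q = inner (P0 p) (P0 q) + infsum (\<lambda>u. inner p u * inner q u) U"
proof -
  have "((\<lambda>u. inner q u *\<^sub>R u) has_sum cvec (\<lambda>u. inner q u)) U"
    unfolding cvec_def using rf_summable[OF U_on bessel_U(1)] by (simp add: summable_iff_has_sum_infsum)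
  then have hs: "((\<lambda>u. inner q u *\<^sub>R u) has_sum (q - P0 q)) U" using expansion by simp
  have "((\<lambda>u. inner p (inner q u *\<^sub>R u)) has_sum inner p (q - P0 q)) U"
    by (rule has_sum_bounded_linear[OF bounded_linear_inner_right hs])
  then have "((\<lambda>u. inner p u * inner q u) has_sum inner p (q - P0 q)) U"
    by (simp add: mult.commute)
  then have "infsum (\<lambda>u. inner p u * inner q u) U = inner p (q - P0 q)"
    by (rule infsumI)
  also have "\<dots> = inner p q - inner p (P0 q)"
    by (simp add: inner_diff_right)
  also have "\<dots> = inner p q - inner (P0 p) (P0 q)"
    using inner_P0_right[of p q] by simp
  finally show ?thesis by simp
qed

lemma parseval_norm: "(norm x)\<^sup>2 = (norm (P0 x))\<^sup>2 + infsum (\<lambda>u. (inner x u)\<^sup>2) U"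
  using parseval[of x x] unfolding power2_norm_eq_inner by (simp add: power2_eq_square)

lemma mk_cvec:
  assumes "(\<lambda>u. (g u)\<^sup>2) summable_on U"
  shows "\<And>k. k \<in> K \<Longrightarrow> inner (c *\<^sub>R P0 y + cvec g) k = c * inner y k"
    and "\<And>u. u \<in> U \<Longrightarrow> inner (c *\<^sub>R P0 y + cvec g) u = g u"
  using cvec_K[OF assms] cvec_inner[OF assms] P0_inner P0_inner_U
  by (simp_all add: inner_add_left)

end



lemma fh_facts:
  fixes m :: real
  defines "f \<equiv> sqrt (1 + m\<^sup>2)"
  shows "\<bar>m\<bar> \<le> f" "f \<le> 1 + \<bar>m\<bar>" "(f + \<bar>m\<bar>) * (f - \<bar>m\<bar>) = 1" "f * (f - \<bar>m\<bar>) \<le> 1"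
    "f\<^sup>2 = 1 + m\<^sup>2" "f > 0"
proof -
  show f2: "f\<^sup>2 = 1 + m\<^sup>2" unfolding f_def by simp
  show fp: "f > 0" unfolding f_def by (simp add: add_pos_nonneg)
  show mf: "\<bar>m\<bar> \<le> f" unfolding f_def by (rule real_le_rsqrt) simp
  show "f \<le> 1 + \<bar>m\<bar>" unfolding f_def
    by (rule real_le_lsqrt) (simp_all add: power2_eq_square algebra_simps)
  have ma: "\<bar>m\<bar>\<^sup>2 = m\<^sup>2" by simp
  have "(f + \<bar>m\<bar>) * (f - \<bar>m\<bar>) = f\<^sup>2 - \<bar>m\<bar>\<^sup>2" by (simp add: power2_eq_square algebra_simps)
  then show "(f + \<bar>m\<bar>) * (f - \<bar>m\<bar>) = 1" using f2 ma by simp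
  have "\<bar>m\<bar> * \<bar>m\<bar> \<le> f * \<bar>m\<bar>" by (rule mult_right_mono[OF mf]) simp
  moreover have "f * (f - \<bar>m\<bar>) = f\<^sup>2 - f * \<bar>m\<bar>" by (simp add: power2_eq_square algebra_simps)
  moreover have "\<bar>m\<bar> * \<bar>m\<bar> = m\<^sup>2" by (simp add: power2_eq_square)
  ultimately show "f * (f - \<bar>m\<bar>) \<le> 1" using f2 by linarith
qed

locale spec3 = spec2 +
  fixes absD domAbs S domS
  assumes absD: "is_abs_op D domD absD domAbs"
    and Sq: "is_sqrt_one_plus_sq D domD S domS"
begin

lemma A_psa: "positive_self_adjoint_op absD domAbs"
  using absD unfolding is_abs_op_def is_pos_sqrt_op_def by blast
lemma A_dom: "{x\<in>domAbs. absD x \<in> domAbs} = dom_sq D domD"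
  using absD unfolding is_abs_op_def is_pos_sqrt_op_def by blast
lemma A_sq: "\<And>x. x \<in> dom_sq D domD \<Longrightarrow> absD (absD x) = D (D x)"
  using absD unfolding is_abs_op_def is_pos_sqrt_op_def by blast

lemma S_psa: "positive_self_adjoint_op S domS"
  using Sq unfolding is_sqrt_one_plus_sq_def is_pos_sqrt_op_def by blast
lemma S_dom: "{x\<in>domS. S x \<in> domS} = dom_sq D domD"
  using Sq unfolding is_sqrt_one_plus_sq_def is_pos_sqrt_op_def by blast
lemma S_sq: "\<And>x. x \<in> dom_sq D domD \<Longrightarrow> S (S x) = x + D (D x)"
  using Sq unfolding is_sqrt_one_plus_sq_def is_pos_sqrt_op_def by blast

lemma U_sq: "u \<in> U \<Longrightarrow> u \<in> dom_sq D domD \<and> D (D u) = (mu u)\<^sup>2 *\<^sub>R u"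
proof -
  assume u: "u \<in> U"
  have m: "D u = mu u *\<^sub>R u" "u \<in> domD" using mu[OF u] by auto
  have "D u \<in> domD" unfolding m(1) by (rule subspace_scale[OF sa_sub[OF sa] m(2)])
  moreover have "D (D u) = (mu u)\<^sup>2 *\<^sub>R u" using m sa_scale[OF sa m(2)] by (simp add: power2_eq_square)
  ultimately show ?thesis using m unfolding dom_sq_def by auto
qed

lemma K_sq: "k \<in> K \<Longrightarrow> k \<in> dom_sq D domD \<and> D (D k) = 0"
proof -
  assume k: "k \<in> K"
  have "D k = 0" "k \<in> domD" using K_D[OF k] K_dom[OF k] by auto
  then show ?thesis using sa_zero[OF sa] subspace_0[OF sa_sub[OF sa]] unfolding dom_sq_def by simp
qed

lemma A_U: "u \<in> U \<Longrightarrow> u \<in> domAbs \<and> absD u = \<bar>mu u\<bar> *\<^sub>R u"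
proof -
  assume u: "u \<in> U"
  have d: "u \<in> domAbs" "absD u \<in> domAbs" using U_sq[OF u] A_dom by auto
  have "absD (absD u) = \<bar>mu u\<bar>\<^sup>2 *\<^sub>R u" using A_sq U_sq[OF u] by simp
  then have "absD u = \<bar>mu u\<bar> *\<^sub>R u" by (rule sqrt_eig[OF A_psa d]) simp
  then show ?thesis using d by simp
qed

lemma A_K: "k \<in> K \<Longrightarrow> k \<in> domAbs \<and> absD k = 0 *\<^sub>R k"
proof -
  assume k: "k \<in> K"
  have d: "k \<in> domAbs" "absD k \<in> domAbs" using K_sq[OF k] A_dom by auto
  have "absD (absD k) = 0\<^sup>2 *\<^sub>R k" using A_sq K_sq[OF k] by simp
  then have "absD k = 0 *\<^sub>R k" by (rule sqrt_eig[OF A_psa d]) simp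
  then show ?thesis using d by simp
qed

definition "fS u = sqrt (1 + (mu u)\<^sup>2)"

lemma S_U: "u \<in> U \<Longrightarrow> u \<in> domS \<and> S u = fS u *\<^sub>R u"
proof -
  assume u: "u \<in> U"
  have d: "u \<in> domS" "S u \<in> domS" using U_sq[OF u] S_dom by auto
  have "S (S u) = (fS u)\<^sup>2 *\<^sub>R u" using S_sq U_sq[OF u] unfolding fS_def
    by (simp add: scaleR_add_left)
  then have "S u = fS u *\<^sub>R u" by (rule sqrt_eig[OF S_psa d]) (simp add: fS_def)
  then show ?thesis using d by simp
qed

lemma S_K: "k \<in> K \<Longrightarrow> k \<in> domS \<and> S k = 1 *\<^sub>R k"
proof -
  assume k: "k \<in> K"
  have d: "k \<in> domS" "S k \<in> domS" using K_sq[OF k] S_dom by auto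
  have "S (S k) = 1\<^sup>2 *\<^sub>R k" using S_sq K_sq[OF k] by simp
  then have "S k = 1 *\<^sub>R k" by (rule sqrt_eig[OF S_psa d]) simp
  then show ?thesis using d by simp
qed

lemma coef_fwd:
  assumes L: "positive_self_adjoint_op L V"
    and LK: "\<forall>k\<in>K. k \<in> V \<and> L k = \<gamma> *\<^sub>R k"
    and LU: "\<forall>u\<in>U. u \<in> V \<and> L u = l u *\<^sub>R u"
    and y: "y \<in> V"
  shows "\<And>k. k \<in> K \<Longrightarrow> inner (L y) k = \<gamma> * inner y k"
    and "\<And>u. u \<in> U \<Longrightarrow> inner (L y) u = l u * inner y u"
proof -
  fix k assume k: "k \<in> K"
  show "inner (L y) k = \<gamma> * inner y k"
    using sa_sym[OF psa_sa[OF L] y, of k] LK k by simp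
next
  fix u assume u: "u \<in> U"
  show "inner (L y) u = l u * inner y u"
    using sa_sym[OF psa_sa[OF L] y, of u] LU u by simp
qed

lemma coef_bwd:
  assumes L: "positive_self_adjoint_op L V"
    and LK: "\<forall>k\<in>K. k \<in> V \<and> L k = \<gamma> *\<^sub>R k"
    and LU: "\<forall>u\<in>U. u \<in> V \<and> L u = l u *\<^sub>R u"
    and hK: "\<And>k. k \<in> K \<Longrightarrow> inner z k = \<gamma> * inner y k"
    and hU: "\<And>u. u \<in> U \<Longrightarrow> inner z u = l u * inner y u"
  shows "y \<in> V \<and> L y = z"
proof -
  have yV: "y \<in> V"
  proof (rule sa_adj[OF psa_sa[OF L]])
    fix w assume w: "w \<in> V"
    note fw = coef_fwd[OF L LK LU w]
    have 1: "inner (L w) y = inner (P0 (L w)) (P0 y) + infsum (\<lambda>u. inner (L w) u * inner y u) U"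
      by (rule parseval)
    have "inner (P0 (L w)) (P0 y) = inner (L w) (P0 y)" using inner_P0_right[of "L w" y] by simp
    also have "\<dots> = \<gamma> * inner w (P0 y)" using fw(1)[OF P0K] by (simp add: inner_commute)
    also have "\<dots> = \<gamma> * inner (P0 w) (P0 y)" using inner_P0_right[of w y] by simp
    finally have 2: "inner (P0 (L w)) (P0 y) = \<gamma> * inner (P0 w) (P0 y)" .
    have 3: "infsum (\<lambda>u. inner (L w) u * inner y u) U = infsum (\<lambda>u. inner w u * inner z u) U"
      by (rule infsum_cong) (simp add: fw(2) hU)
    have 4: "inner w z = inner (P0 w) (P0 z) + infsum (\<lambda>u. inner w u * inner z u) U"
      by (rule parseval)
    have "inner (P0 w) (P0 z) = inner (P0 w) z" using inner_P0_left[of w z] by simp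
    also have "\<dots> = \<gamma> * inner y (P0 w)" using hK[OF P0K, of w] by (simp add: inner_commute)
    also have "\<dots> = \<gamma> * inner (P0 w) (P0 y)" using inner_P0_right[of y w] by (simp add: inner_commute)
    finally have 5: "inner (P0 w) (P0 z) = \<gamma> * inner (P0 w) (P0 y)" .
    show "inner (L w) y = inner w z" using 1 2 3 4 5 by simp
  qed
  moreover have "L y = z"
  proof (rule ext_eq)
    note fy = coef_fwd[OF L LK LU yV]
    show "\<And>k. k \<in> K \<Longrightarrow> inner (L y) k = inner z k" using fy(1) hK by simp
    show "\<And>u. u \<in> U \<Longrightarrow> inner (L y) u = inner z u" using fy(2) hU by simp
  qed
  ultimately show ?thesis by blast
qed

lemma A_K': "\<forall>k\<in>K. k \<in> domAbs \<and> absD k = 0 *\<^sub>R k" using A_K by blast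
lemma A_U': "\<forall>u\<in>U. u \<in> domAbs \<and> absD u = \<bar>mu u\<bar> *\<^sub>R u" using A_U by blast
lemma S_K': "\<forall>k\<in>K. k \<in> domS \<and> S k = 1 *\<^sub>R k" using S_K by blast
lemma S_U': "\<forall>u\<in>U. u \<in> domS \<and> S u = fS u *\<^sub>R u" using S_U by blast

lemmas A_fwd = coef_fwd[OF A_psa A_K' A_U']
lemmas A_bwd = coef_bwd[OF A_psa A_K' A_U']
lemmas S_fwd = coef_fwd[OF S_psa S_K' S_U']
lemmas S_bwd = coef_bwd[OF S_psa S_K' S_U']

lemma fS_facts: "\<bar>mu u\<bar> \<le> fS u" "fS u \<le> 1 + \<bar>mu u\<bar>" "(fS u + \<bar>mu u\<bar>) * (fS u - \<bar>mu u\<bar>) = 1"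
  "fS u * (fS u - \<bar>mu u\<bar>) \<le> 1" "(fS u)\<^sup>2 = 1 + (mu u)\<^sup>2" "fS u > 0"
  unfolding fS_def by (rule fh_facts)+

lemma domS_sub: "y \<in> domS \<Longrightarrow> y \<in> domAbs"
proof -
  assume y: "y \<in> domS"
  define g where "g u = \<bar>mu u\<bar> * inner y u" for u
  have gs: "(\<lambda>u. (g u)\<^sup>2) summable_on U"
  proof (rule summable_on_comparison_test[OF bessel_U(1)[of "S y"]])
    fix u assume u: "u \<in> U"
    have "\<bar>mu u\<bar>\<^sup>2 \<le> (fS u)\<^sup>2" by (rule power_mono[OF fS_facts(1)]) simp
    then have "\<bar>mu u\<bar>\<^sup>2 * (inner y u)\<^sup>2 \<le> (fS u)\<^sup>2 * (inner y u)\<^sup>2" by (simp add: mult_right_mono)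
    then show "(g u)\<^sup>2 \<le> (inner (S y) u)\<^sup>2" unfolding g_def S_fwd(2)[OF y u] by (simp add: power_mult_distrib)
    show "0 \<le> (g u)\<^sup>2" by simp
  qed
  define z where "z = 0 *\<^sub>R P0 y + cvec g"
  have zk: "\<And>k. k \<in> K \<Longrightarrow> inner z k = 0 * inner y k" unfolding z_def by (rule mk_cvec(1)[OF gs])
  have zu: "\<And>u. u \<in> U \<Longrightarrow> inner z u = \<bar>mu u\<bar> * inner y u"
    unfolding z_def using mk_cvec(2)[OF gs] unfolding g_def by blast
  show ?thesis using A_bwd[OF zk zu] by blast
qed

lemma domA_sub: "y \<in> domAbs \<Longrightarrow> y \<in> domS"
proof -
  assume y: "y \<in> domAbs"
  define g where "g u = fS u * inner y u" for u
  have gs: "(\<lambda>u. (g u)\<^sup>2) summable_on U"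
  proof -
    have "(\<lambda>u. (inner y u)\<^sup>2 + (inner (absD y) u)\<^sup>2) summable_on U"
      by (intro summable_on_add bessel_U(1))
    moreover have "(inner y u)\<^sup>2 + (inner (absD y) u)\<^sup>2 = (g u)\<^sup>2" if "u \<in> U" for u
      unfolding g_def A_fwd(2)[OF y that] using fS_facts(5)[of u]
      by (simp add: power_mult_distrib algebra_simps)
    ultimately show ?thesis by (rule summable_on_cong[THEN iffD1, rotated])
  qed
  define z where "z = 1 *\<^sub>R P0 y + cvec g"
  have zk: "\<And>k. k \<in> K \<Longrightarrow> inner z k = 1 * inner y k" unfolding z_def by (rule mk_cvec(1)[OF gs])
  have zu: "\<And>u. u \<in> U \<Longrightarrow> inner z u = fS u * inner y u"
    unfolding z_def using mk_cvec(2)[OF gs] unfolding g_def by blast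
  show ?thesis using S_bwd[OF zk zu] by blast
qed

lemma domS_eq: "domS = domAbs" using domS_sub domA_sub by blast

end



context spec3 begin

definition "hh u = fS u - \<bar>mu u\<bar>"

lemma hh: "0 \<le> hh u" "hh u \<le> 1" "fS u * hh u \<le> 1" "0 \<le> fS u * hh u" "(fS u + \<bar>mu u\<bar>) * hh u = 1"
proof -
  show h0: "0 \<le> hh u" unfolding hh_def using fS_facts(1)[of u] by simp
  show "hh u \<le> 1" unfolding hh_def using fS_facts(2)[of u] by simp
  show "fS u * hh u \<le> 1" unfolding hh_def using fS_facts(4)[of u] .
  show "0 \<le> fS u * hh u" using h0 fS_facts(6)[of u] by simp
  show "(fS u + \<bar>mu u\<bar>) * hh u = 1" unfolding hh_def using fS_facts(3)[of u] .
qed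

lemma sq_le_of_bounded:
  fixes a c :: real
  assumes "0 \<le> a" "a \<le> 1"
  shows "(a * c)\<^sup>2 \<le> c\<^sup>2"
proof -
  have "a\<^sup>2 \<le> 1" using assms by (simp add: power_le_one)
  then have "a\<^sup>2 * c\<^sup>2 \<le> 1 * c\<^sup>2" by (rule mult_right_mono) simp
  then show ?thesis by (simp add: power_mult_distrib)
qed

lemma bounded_coef_summable:
  assumes "\<And>u. u \<in> U \<Longrightarrow> 0 \<le> a u \<and> a u \<le> 1"
  shows "(\<lambda>u. (a u * inner x u)\<^sup>2) summable_on U"
proof (rule summable_on_comparison_test[OF bessel_U(1)[of x]])
  fix u assume "u \<in> U"
  then show "(a u * inner x u)\<^sup>2 \<le> (inner x u)\<^sup>2" using assms sq_le_of_bounded by blast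
qed simp

definition "H x = 1 *\<^sub>R P0 x + cvec (\<lambda>u. hh u * inner x u)"

lemma hs: "(\<lambda>u. (hh u * inner x u)\<^sup>2) summable_on U"
  by (rule bounded_coef_summable) (use hh in blast)

lemma H_K: "k \<in> K \<Longrightarrow> inner (H x) k = inner x k"
  unfolding H_def using mk_cvec(1)[OF hs, of k 1 x] by simp

lemma H_U: "u \<in> U \<Longrightarrow> inner (H x) u = hh u * inner x u"
  unfolding H_def by (rule mk_cvec(2)[OF hs])

lemma H_add: "H (x + y) = H x + H y"
  by (rule ext_eq) (simp_all add: H_K H_U inner_add_left algebra_simps)

lemma H_scale: "H (c *\<^sub>R x) = c *\<^sub>R H x"
  by (rule ext_eq) (simp_all add: H_K H_U)

lemma P0_H: "P0 (H x) = P0 x"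
  by (rule P0_eq) (rule H_K)

lemma H_norm: "norm (H x) \<le> norm x"
proof -
  have "(norm (H x))\<^sup>2 = (norm (P0 (H x)))\<^sup>2 + infsum (\<lambda>u. (inner (H x) u)\<^sup>2) U"
    by (rule parseval_norm)
  also have "\<dots> = (norm (P0 x))\<^sup>2 + infsum (\<lambda>u. (hh u * inner x u)\<^sup>2) U"
    using P0_H H_U by (simp cong: infsum_cong)
  also have "\<dots> \<le> (norm (P0 x))\<^sup>2 + infsum (\<lambda>u. (inner x u)\<^sup>2) U"
    using infsum_mono[OF hs bessel_U(1)] sq_le_of_bounded hh(1,2) by (simp add: add_left_mono)
  also have "\<dots> = (norm x)\<^sup>2" using parseval_norm[of x] by simp
  finally show ?thesis by (rule power2_le_imp_le) simp
qed

lemma H_bl: "bounded_linear H"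
  by (rule bounded_linear_intro[where K=1]) (simp_all add: H_add H_scale H_norm)

lemma H_Q_norm:
  assumes c: "\<And>u. u \<in> U \<Longrightarrow> hh u \<le> c" and c0: "0 \<le> c"
  shows "norm (H (x - P0 x)) \<le> c * norm x"
proof -
  have cu: "(\<lambda>u. c\<^sup>2 * (inner x u)\<^sup>2) summable_on U"
    by (rule summable_on_cmult_right[OF bessel_U(1)])
  have ix: "inner (x - P0 x) u = inner x u" if "u \<in> U" for u
    using P0_inner_U[OF that] by (simp add: inner_diff_left)
  have "(norm (H (x - P0 x)))\<^sup>2 = (norm (P0 (H (x - P0 x))))\<^sup>2 + infsum (\<lambda>u. (inner (H (x - P0 x)) u)\<^sup>2) U"
    by (rule parseval_norm)
  also have "\<dots> = infsum (\<lambda>u. (hh u * inner x u)\<^sup>2) U"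
    using P0_H[of "x - P0 x"] P0_Q[of x] H_U ix by (simp cong: infsum_cong)
  also have "\<dots> \<le> infsum (\<lambda>u. c\<^sup>2 * (inner x u)\<^sup>2) U"
  proof (rule infsum_mono[OF hs cu])
    fix u assume u: "u \<in> U"
    have "(hh u)\<^sup>2 \<le> c\<^sup>2" using power_mono[OF c[OF u] hh(1)] .
    then have "(hh u)\<^sup>2 * (inner x u)\<^sup>2 \<le> c\<^sup>2 * (inner x u)\<^sup>2" by (rule mult_right_mono) simp
    then show "(hh u * inner x u)\<^sup>2 \<le> c\<^sup>2 * (inner x u)\<^sup>2" by (simp add: power_mult_distrib)
  qed
  also have "\<dots> = c\<^sup>2 * infsum (\<lambda>u. (inner x u)\<^sup>2) U"
    by (rule infsum_cmult_right[OF bessel_U(1)])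
  also have "\<dots> \<le> c\<^sup>2 * (norm x)\<^sup>2"
    by (rule mult_left_mono[OF bessel_U(2)]) simp
  also have "\<dots> = (c * norm x)\<^sup>2" by (simp add: power_mult_distrib)
  finally show ?thesis by (rule power2_le_imp_le) (simp add: c0)
qed

lemma H_Q: "H (x - P0 x) = H x - P0 (H x)"
proof (rule ext_eq)
  fix k assume k: "k \<in> K"
  show "inner (H (x - P0 x)) k = inner (H x - P0 (H x)) k"
    using H_K[OF k] P0perp[OF k] by (simp add: inner_diff_left)
next
  fix u assume u: "u \<in> U"
  show "inner (H (x - P0 x)) u = inner (H x - P0 (H x)) u"
    using H_U[OF u] P0_inner_U[OF u] by (simp add: inner_diff_left algebra_simps)
qed

lemma H_dom: "H x \<in> domS \<and> S (H x) + absD (H x) = x"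
proof -
  define g where "g u = fS u * hh u * inner x u" for u
  have gs: "(\<lambda>u. (g u)\<^sup>2) summable_on U"
    unfolding g_def by (rule bounded_coef_summable) (use hh in blast)
  define z where "z = 1 *\<^sub>R P0 x + cvec g"
  have zk: "inner z k = 1 * inner (H x) k" if k: "k \<in> K" for k
  proof -
    have "inner z k = 1 * inner x k" unfolding z_def by (rule mk_cvec(1)[OF gs k])
    then show ?thesis using H_K[OF k] by simp
  qed
  have zu: "inner z u = fS u * inner (H x) u" if u: "u \<in> U" for u
  proof -
    have "inner z u = g u" unfolding z_def by (rule mk_cvec(2)[OF gs u])
    then show ?thesis using H_U[OF u] unfolding g_def by simp
  qed
  have d: "H x \<in> domS" using S_bwd[OF zk zu] by blast
  have dA: "H x \<in> domAbs" using domS_sub[OF d] .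
  have "S (H x) + absD (H x) = x"
  proof (rule ext_eq)
    fix k assume k: "k \<in> K"
    show "inner (S (H x) + absD (H x)) k = inner x k"
      using S_fwd(1)[OF d k] A_fwd(1)[OF dA k] H_K[OF k] by (simp add: inner_add_left)
  next
    fix u assume u: "u \<in> U"
    have "inner (S (H x) + absD (H x)) u = (fS u + \<bar>mu u\<bar>) * hh u * inner x u"
      using S_fwd(2)[OF d u] A_fwd(2)[OF dA u] H_U[OF u] by (simp add: inner_add_left algebra_simps)
    then show "inner (S (H x) + absD (H x)) u = inner x u" using hh(5)[of u] by simp
  qed
  then show ?thesis using d by blast
qed

lemma H_inv: "y \<in> domS \<Longrightarrow> H (S y + absD y) = y"
proof (rule ext_eq)
  assume y: "y \<in> domS"
  have yA: "y \<in> domAbs" using domS_sub[OF y] .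
  fix k assume k: "k \<in> K"
  show "inner (H (S y + absD y)) k = inner y k"
    using H_K[OF k] S_fwd(1)[OF y k] A_fwd(1)[OF yA k] by (simp add: inner_add_left)
next
  assume y: "y \<in> domS"
  have yA: "y \<in> domAbs" using domS_sub[OF y] .
  fix u assume u: "u \<in> U"
  have "inner (H (S y + absD y)) u = (fS u + \<bar>mu u\<bar>) * hh u * inner y u"
    using H_U[OF u] S_fwd(2)[OF y u] A_fwd(2)[OF yA u] by (simp add: inner_add_left algebra_simps)
  then show "inner (H (S y + absD y)) u = inner y u" using hh(5)[of u] by simp
qed

lemma S_split: "y \<in> domS \<Longrightarrow> S y = absD y + H y"
proof (rule ext_eq)
  assume y: "y \<in> domS"
  have yA: "y \<in> domAbs" using domS_sub[OF y] .
  fix k assume k: "k \<in> K"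
  show "inner (S y) k = inner (absD y + H y) k"
    using H_K[OF k] S_fwd(1)[OF y k] A_fwd(1)[OF yA k] by (simp add: inner_add_left)
next
  assume y: "y \<in> domS"
  have yA: "y \<in> domAbs" using domS_sub[OF y] .
  fix u assume u: "u \<in> U"
  show "inner (S y) u = inner (absD y + H y) u"
    using H_U[OF u] S_fwd(2)[OF y u] A_fwd(2)[OF yA u] unfolding hh_def by (simp add: inner_add_left algebra_simps)
qed

end



lemma hh_mono:
  fixes l m :: real
  assumes l: "0 < l" "l \<le> \<bar>m\<bar>"
  shows "sqrt (1 + m\<^sup>2) - \<bar>m\<bar> \<le> sqrt (1 + l\<^sup>2) - l"
proof -
  have e1: "sqrt (1 + m\<^sup>2) - \<bar>m\<bar> = 1 / (sqrt (1 + m\<^sup>2) + \<bar>m\<bar>)"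
  proof -
    have "(sqrt (1 + m\<^sup>2) + \<bar>m\<bar>) * (sqrt (1 + m\<^sup>2) - \<bar>m\<bar>) = 1"
      by (simp add: algebra_simps power2_eq_square[symmetric])
    moreover have "sqrt (1 + m\<^sup>2) + \<bar>m\<bar> > 0" by (simp add: add_pos_nonneg)
    ultimately show ?thesis by (simp add: field_simps)
  qed
  have e2: "sqrt (1 + l\<^sup>2) - l = 1 / (sqrt (1 + l\<^sup>2) + l)"
  proof -
    have "(sqrt (1 + l\<^sup>2) + l) * (sqrt (1 + l\<^sup>2) - l) = 1"
      by (simp add: algebra_simps power2_eq_square[symmetric])
    moreover have "sqrt (1 + l\<^sup>2) + l > 0" using l by (simp add: add_pos_pos)
    ultimately show ?thesis by (simp add: field_simps)
  qed
  have "l\<^sup>2 \<le> \<bar>m\<bar>\<^sup>2" by (rule power_mono[OF l(2)]) (use l in simp)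
  then have "l\<^sup>2 \<le> m\<^sup>2" by simp
  then have "sqrt (1 + l\<^sup>2) \<le> sqrt (1 + m\<^sup>2)" by simp
  then have "sqrt (1 + l\<^sup>2) + l \<le> sqrt (1 + m\<^sup>2) + \<bar>m\<bar>" using l by linarith
  moreover have "0 < sqrt (1 + l\<^sup>2) + l" using l by (simp add: add_pos_pos)
  moreover have "0 < sqrt (1 + m\<^sup>2) + \<bar>m\<bar>" by (simp add: add_pos_nonneg)
  ultimately have "1 / (sqrt (1 + m\<^sup>2) + \<bar>m\<bar>) \<le> 1 / (sqrt (1 + l\<^sup>2) + l)"
    by (intro divide_left_mono) simp_all
  then show ?thesis using e1 e2 by simp
qed

lemma h1_facts:
  fixes l :: real
  assumes l: "0 < l"
  defines "h \<equiv> sqrt (1 + l\<^sup>2) - l"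
  shows "0 \<le> h" "h < 1" "(1 + h\<^sup>2) / (1 - h\<^sup>2) = sqrt (1 + 1 / l\<^sup>2)"
proof -
  define f where "f = sqrt (1 + l\<^sup>2)"
  have f2: "f\<^sup>2 = 1 + l\<^sup>2" unfolding f_def by simp
  have fl: "l < f" unfolding f_def by (rule real_less_rsqrt) simp
  have f1: "1 < f" unfolding f_def using l by (simp add: real_less_rsqrt)
  show "0 \<le> h" unfolding h_def using fl f_def by simp
  have "h < 1" unfolding h_def f_def[symmetric]
  proof -
    have "f < 1 + l" unfolding f_def
      by (rule real_less_lsqrt) (use l in \<open>simp_all add: power2_eq_square algebra_simps\<close>)
    then show "f - l < 1" by simp
  qed
  then show "h < 1" .
  have h2: "h\<^sup>2 = 1 + 2 * l\<^sup>2 - 2 * f * l" unfolding h_def f_def[symmetric]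
    using f2 by (simp add: power2_eq_square algebra_simps)
  have n: "1 + h\<^sup>2 = 2 * f * (f - l)" using h2 f2 by (simp add: power2_eq_square algebra_simps)
  have d: "1 - h\<^sup>2 = 2 * l * (f - l)" using h2 f2 by (simp add: power2_eq_square algebra_simps)
  have "(1 + h\<^sup>2) / (1 - h\<^sup>2) = f / l" unfolding n d using fl l by (simp add: field_simps)
  also have "f / l = sqrt (1 + 1 / l\<^sup>2)"
  proof -
    have "(f / l)\<^sup>2 = 1 + 1 / l\<^sup>2" using f2 l by (simp add: power_divide field_simps)
    moreover have "f / l \<ge> 0" using fl l by simp
    ultimately show ?thesis by (metis real_sqrt_abs abs_of_nonneg)
  qed
  finally show "(1 + h\<^sup>2) / (1 - h\<^sup>2) = sqrt (1 + 1 / l\<^sup>2)" .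
qed

theorem lemma2p9:
  fixes D :: "'h::{real_inner, complete_space} \<Rightarrow> 'h" and domD :: "'h set"
    and P0 :: "'h \<Rightarrow> 'h"
    and absD :: "'h \<Rightarrow> 'h" and domAbs :: "'h set"
    and S :: "'h \<Rightarrow> 'h" and domS :: "'h set"
    and a :: "'h \<Rightarrow> 'h" and B :: "'h \<Rightarrow> 'h" and lam1 :: real
  assumes sa: "self_adjoint_op D domD"
    and P0: "is_orth_proj P0 (ker_op D domD)"
    and ess: "essentially_discrete D domD P0"
    and absD: "is_abs_op D domD absD domAbs"
    and S: "is_sqrt_one_plus_sq D domD S domS"
    and a_bdd: "bounded_linear a"
    and a_dom: "\<forall>x\<in>domD. a x \<in> domD"
    and Da_bdd: "\<exists>c. \<forall>x\<in>domD. norm (D (a x) - a (D x)) \<le> c * norm x"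
    and a_domAbs: "\<forall>x\<in>domAbs. a x \<in> domAbs"
    and B: "bounded_linear B"
    and B_comm: "\<forall>x\<in>domAbs. absD (a x) - a (absD x) = B x"
    and lam1_eig: "lam1 \<noteq> 0 \<and> (\<exists>x\<in>domAbs. x \<noteq> 0 \<and> absD x = lam1 *\<^sub>R x)"
    and lam1_least: "\<forall>\<mu> x. \<mu> \<noteq> 0 \<and> x \<in> domAbs \<and> x \<noteq> 0 \<and> absD x = \<mu> *\<^sub>R x \<longrightarrow> lam1 \<le> \<mu>"
  shows "(\<forall>x\<in>domS. a x \<in> domS \<and>
            norm (S (a x) - a (S x)) \<le> (onorm B + 2 * onorm a) * norm x)
       \<and> (\<forall>x. x - P0 x \<in> domS \<longrightarrow>
            (let y = x - P0 x; c = S (a y) - a (S y) in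
              norm (c - P0 c) \<le> sqrt (1 + 1 / lam1\<^sup>2) * onorm B * norm x))"
proof -
  obtain T where Tc: "compact_op T"
    and Tp: "\<forall>x. T x \<in> domD \<and> P0 (T x) = 0 \<and> D (T x) = x - P0 x \<and> T (P0 x) = 0"
    and TD: "\<forall>y\<in>domD. P0 y = 0 \<longrightarrow> T (D y) = y"
    using ess unfolding essentially_discrete_def by blast
  interpret s1: spec1 D domD P0 T
    by (rule spec1.intro) (use sa P0 Tc Tp TD in auto)
  obtain U where U: "orthonorm U" "U \<subseteq> s1.Eset"
    "\<forall>U'. orthonorm U' \<and> U' \<subseteq> s1.Eset \<and> U \<subseteq> U' \<longrightarrow> U' = U"
    using s1.exists_maximal by blast
  interpret s3: spec3 D domD P0 T U absD domAbs S domS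
  proof (rule spec3.intro)
    show "spec2 D domD P0 T U"
      by (rule spec2.intro[OF s1.spec1_axioms]) (rule spec2_axioms.intro, use U in auto)
    show "spec3_axioms D domD absD domAbs S domS"
      by (rule spec3_axioms.intro[OF absD S])
  qed
  let ?H = "s3.H"
  let ?Q = "\<lambda>v. v - P0 v"
  have lampos: "lam1 > 0"
  proof -
    obtain x where x: "x \<in> domAbs" "x \<noteq> 0" "absD x = lam1 *\<^sub>R x" using lam1_eig by blast
    have "0 \<le> inner (absD x) x" using psa_pos[OF s3.A_psa x(1)] .
    then have "0 \<le> lam1 * inner x x" using x(3) by simp
    moreover have "inner x x > 0" using x(2) by simp
    ultimately have "0 \<le> lam1" by (simp add: zero_le_mult_iff)
    then show ?thesis using lam1_eig by simp
  qed
  define h1 where "h1 = sqrt (1 + lam1\<^sup>2) - lam1"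
  have h1: "0 \<le> h1" "h1 < 1" "(1 + h1\<^sup>2) / (1 - h1\<^sup>2) = sqrt (1 + 1 / lam1\<^sup>2)"
    unfolding h1_def using h1_facts[OF lampos] by auto
  have hh_le: "s3.hh u \<le> h1" if u: "u \<in> U" for u
  proof -
    have A: "u \<in> domAbs \<and> absD u = \<bar>s3.mu u\<bar> *\<^sub>R u" using s3.A_U[OF u] .
    have "s3.mu u \<noteq> 0" using s3.mu[OF u] by blast
    moreover have "u \<noteq> 0" using s3.U_norm[OF u] by auto
    ultimately have "\<bar>s3.mu u\<bar> \<noteq> 0 \<and> u \<in> domAbs \<and> u \<noteq> 0 \<and> absD u = \<bar>s3.mu u\<bar> *\<^sub>R u"
      using A by simp
    then have "lam1 \<le> \<bar>s3.mu u\<bar>" using lam1_least by blast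
    then show ?thesis unfolding s3.hh_def s3.fS_def h1_def using hh_mono[OF lampos] by blast
  qed
  have a_lin: "bounded_linear a" by fact
  interpret a: bounded_linear a by fact
  interpret Bl: bounded_linear B by fact
  interpret Hl: bounded_linear ?H by (rule s3.H_bl)
  interpret P0l: bounded_linear P0 by (rule s1.P0_bl)
  define Xb where "Xb w = B w + ?H (a w) - a (?H w)" for w
  have F5: "S (a y) - a (S y) = Xb y" if y: "y \<in> domS" for y
  proof -
    have yA: "y \<in> domAbs" using s3.domS_sub[OF y] .
    have ayA: "a y \<in> domAbs" using a_domAbs yA by blast
    have ayS: "a y \<in> domS" using s3.domA_sub[OF ayA] .
    have "S (a y) - a (S y) = (absD (a y) + ?H (a y)) - a (absD y + ?H y)"
      using s3.S_split[OF ayS] s3.S_split[OF y] by simp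
    also have "\<dots> = (absD (a y) - a (absD y)) + ?H (a y) - a (?H y)"
      by (simp add: a.add)
    also have "\<dots> = Xb y" unfolding Xb_def using B_comm yA by simp
    finally show ?thesis .
  qed
  have part1: "\<forall>x\<in>domS. a x \<in> domS \<and> norm (S (a x) - a (S x)) \<le> (onorm B + 2 * onorm a) * norm x"
  proof
    fix x assume x: "x \<in> domS"
    have "a x \<in> domS" using s3.domA_sub a_domAbs s3.domS_sub[OF x] by blast
    moreover have "norm (Xb x) \<le> (onorm B + 2 * onorm a) * norm x"
    proof -
      have "norm (Xb x) \<le> norm (B x) + norm (?H (a x)) + norm (a (?H x))"
      proof -
        have "norm (Xb x) \<le> norm (B x + ?H (a x)) + norm (a (?H x))"
          unfolding Xb_def by (rule norm_triangle_ineq4)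
        moreover have "norm (B x + ?H (a x)) \<le> norm (B x) + norm (?H (a x))"
          by (rule norm_triangle_ineq)
        ultimately show ?thesis by linarith
      qed
      also have "\<dots> \<le> onorm B * norm x + onorm a * norm x + onorm a * norm x"
      proof -
        have 1: "norm (B x) \<le> onorm B * norm x" by (rule onorm[OF B])
        have 2: "norm (?H (a x)) \<le> onorm a * norm x"
          using s3.H_norm[of "a x"] onorm[OF a_bdd, of x] by linarith
        have 3: "norm (a (?H x)) \<le> onorm a * norm x"
        proof -
          have "norm (a (?H x)) \<le> onorm a * norm (?H x)" by (rule onorm[OF a_bdd])
          also have "\<dots> \<le> onorm a * norm x"
            by (rule mult_left_mono[OF s3.H_norm onorm_pos_le[OF a_bdd]])
          finally show ?thesis .
        qed
        show ?thesis using 1 2 3 by linarith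
      qed
      also have "\<dots> = (onorm B + 2 * onorm a) * norm x" by (simp add: algebra_simps)
      finally show ?thesis .
    qed
    ultimately show "a x \<in> domS \<and> norm (S (a x) - a (S x)) \<le> (onorm B + 2 * onorm a) * norm x"
      using F5[OF x] by simp
  qed
  have key: "Xb w = B w - ?H (Xb (?H w) + B (?H w))" for w
  proof -
    have Hw: "?H w \<in> domS" "S (?H w) + absD (?H w) = w" using s3.H_dom by auto
    have HwA: "?H w \<in> domAbs" using s3.domS_sub[OF Hw(1)] .
    have aHw: "a (?H w) \<in> domS" using s3.domA_sub a_domAbs HwA by blast
    have "Xb (?H w) + B (?H w) = (S (a (?H w)) - a (S (?H w))) + (absD (a (?H w)) - a (absD (?H w)))"
      using F5[OF Hw(1)] B_comm HwA by simp
    also have "\<dots> = (S (a (?H w)) + absD (a (?H w))) - a (S (?H w) + absD (?H w))"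
      by (simp add: a.add algebra_simps)
    also have "\<dots> = (S (a (?H w)) + absD (a (?H w))) - a w" using Hw(2) by simp
    finally have "?H (Xb (?H w) + B (?H w)) = ?H (S (a (?H w)) + absD (a (?H w))) - ?H (a w)"
      by (simp add: Hl.diff)
    also have "\<dots> = a (?H w) - ?H (a w)" using s3.H_inv[OF aHw] by simp
    finally show ?thesis unfolding Xb_def by simp
  qed
  have QQ: "?Q (?Q v) = ?Q v" for v using s1.P0_Q[of v] by simp
  have QH: "?H (?Q v) = ?Q (?H v)" for v using s3.H_Q by simp
  have Qn: "norm (?Q v) \<le> norm v" for v by (rule s1.Q_norm)
  define Z where "Z w = ?Q (Xb (?Q w))" for w
  have Qbl: "bounded_linear ?Q" by (intro bounded_linear_sub bounded_linear_ident s1.P0_bl)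
  have Xbl: "bounded_linear Xb" unfolding Xb_def[abs_def]
    by (intro bounded_linear_sub bounded_linear_add B bounded_linear_compose[OF s3.H_bl a_bdd]
        bounded_linear_compose[OF a_bdd s3.H_bl])
  have Zbl: "bounded_linear Z" unfolding Z_def[abs_def]
    using bounded_linear_compose[OF Qbl bounded_linear_compose[OF Xbl Qbl]] by simp
  define N where "N = onorm Z"
  have N0: "0 \<le> N" unfolding N_def by (rule onorm_pos_le[OF Zbl])
  have nB0: "0 \<le> onorm B" by (rule onorm_pos_le[OF B])
  have Zb: "norm (Z w) \<le> (onorm B + h1\<^sup>2 * (N + onorm B)) * norm w" for w
  proof -
    define p where "p = ?H (?Q w)"
    have Qp: "?Q p = p" unfolding p_def using QH[of "?Q w"] QQ[of w] by simp
    have pn: "norm p \<le> h1 * norm w" unfolding p_def by (rule s3.H_Q_norm[OF hh_le h1(1)])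
    define y where "y = Xb p + B p"
    have Qy: "?Q y = Z p + ?Q (B p)"
    proof -
      have "?Q y = ?Q (Xb p) + ?Q (B p)" unfolding y_def by (simp add: P0l.add)
      also have "?Q (Xb p) = Z p" unfolding Z_def using Qp by simp
      finally show ?thesis .
    qed
    have "Z w = ?Q (B (?Q w) - ?H y)" unfolding Z_def y_def p_def using key[of "?Q w"] by simp
    also have "\<dots> = ?Q (B (?Q w)) - ?H (?Q (?Q y))"
      using QH[of y] QQ[of y] by (simp add: P0l.diff)
    finally have Zw: "Z w = ?Q (B (?Q w)) - ?H (?Q (?Q y))" .
    have t1: "norm (?Q (B (?Q w))) \<le> onorm B * norm w"
    proof -
      have "norm (?Q (B (?Q w))) \<le> norm (B (?Q w))" by (rule Qn)
      also have "\<dots> \<le> onorm B * norm (?Q w)" by (rule onorm[OF B])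
      also have "\<dots> \<le> onorm B * norm w" by (rule mult_left_mono[OF Qn nB0])
      finally show ?thesis .
    qed
    have t2: "norm (?H (?Q (?Q y))) \<le> h1 * norm (?Q y)"
      by (rule s3.H_Q_norm[OF hh_le h1(1)])
    have t3: "norm (?Q y) \<le> (N + onorm B) * norm p"
    proof -
      have "norm (?Q y) \<le> norm (Z p) + norm (?Q (B p))" unfolding Qy by (rule norm_triangle_ineq)
      also have "\<dots> \<le> N * norm p + onorm B * norm p"
        using onorm[OF Zbl, of p] Qn[of "B p"] onorm[OF B, of p] unfolding N_def by linarith
      finally show ?thesis by (simp add: algebra_simps)
    qed
    have "norm (Z w) \<le> norm (?Q (B (?Q w))) + norm (?H (?Q (?Q y)))"
      unfolding Zw by (rule norm_triangle_ineq4)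
    also have "\<dots> \<le> onorm B * norm w + h1 * ((N + onorm B) * (h1 * norm w))"
    proof -
      have "norm (?Q y) \<le> (N + onorm B) * (h1 * norm w)"
        using t3 mult_left_mono[OF pn, of "N + onorm B"] N0 nB0 by linarith
      then have "h1 * norm (?Q y) \<le> h1 * ((N + onorm B) * (h1 * norm w))"
        by (rule mult_left_mono) (rule h1(1))
      then show ?thesis using t1 t2 by linarith
    qed
    also have "\<dots> = (onorm B + h1\<^sup>2 * (N + onorm B)) * norm w"
      by (simp add: power2_eq_square algebra_simps)
    finally show ?thesis .
  qed
  have "N \<le> onorm B + h1\<^sup>2 * (N + onorm B)"
  proof -
    have "0 \<le> h1\<^sup>2 * (N + onorm B)" using N0 nB0 by simp
    then have "0 \<le> onorm B + h1\<^sup>2 * (N + onorm B)" using nB0 by linarith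
    then show ?thesis unfolding N_def by (rule onorm_bound) (rule Zb[unfolded N_def])
  qed
  then have "N * (1 - h1\<^sup>2) \<le> onorm B * (1 + h1\<^sup>2)" by (simp add: algebra_simps)
  moreover have h1s: "0 < 1 - h1\<^sup>2"
  proof -
    have "h1 * h1 \<le> h1" by (rule mult_left_le) (use h1 in simp_all)
    then have "h1\<^sup>2 < 1" using h1(2) by (simp add: power2_eq_square)
    then show ?thesis by simp
  qed
  ultimately have "N \<le> onorm B * (1 + h1\<^sup>2) / (1 - h1\<^sup>2)" by (simp add: field_simps)
  also have "\<dots> = onorm B * ((1 + h1\<^sup>2) / (1 - h1\<^sup>2))" by simp
  also have "\<dots> = sqrt (1 + 1 / lam1\<^sup>2) * onorm B" unfolding h1(3) by simp
  finally have Nle: "N \<le> sqrt (1 + 1 / lam1\<^sup>2) * onorm B" .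
  have part2: "\<forall>x. x - P0 x \<in> domS \<longrightarrow>
            (let y = x - P0 x; c = S (a y) - a (S y) in
              norm (c - P0 c) \<le> sqrt (1 + 1 / lam1\<^sup>2) * onorm B * norm x)"
  proof (intro allI impI)
    fix x assume x: "x - P0 x \<in> domS"
    have "S (a (?Q x)) - a (S (?Q x)) = Xb (?Q x)" using F5[OF x] .
    then have "?Q (S (a (?Q x)) - a (S (?Q x))) = Z x" unfolding Z_def by simp
    moreover have "norm (Z x) \<le> sqrt (1 + 1 / lam1\<^sup>2) * onorm B * norm x"
    proof -
      have "norm (Z x) \<le> N * norm x" unfolding N_def by (rule onorm[OF Zbl])
      also have "\<dots> \<le> sqrt (1 + 1 / lam1\<^sup>2) * onorm B * norm x"
        by (rule mult_right_mono[OF Nle]) simp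
      finally show ?thesis .
    qed
    ultimately show "let y = x - P0 x; c = S (a y) - a (S y) in
              norm (c - P0 c) \<le> sqrt (1 + 1 / lam1\<^sup>2) * onorm B * norm x"
      unfolding Let_def by simp
  qed
  show ?thesis using part1 part2 by blast
qed


end
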